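(* Let $a=\{a_1,\ldots,a_n\}$ be a list of positive integers and for $\epsilon\in\mathbb{R}$ let $$q^h_{a,\epsilon}(x):=\sum_i x_i^4+\Big(\big(\sum_i a_ix_i\big)^2-2\sum_i x_i^2\Big)\Big(\frac1n\sum_i x_i^2\Big)+(n-\epsilon)\Big(\frac1n\sum_i x_i^2\Big)^2 .$$ Then the linear program $\max_{\epsilon\in\mathbb{R}}\{\epsilon : q^h_{a,\epsilon} \text{ is dsos}\}$ is feasible, i.e., there exists $\epsilon\in\mathbb{R}$ such that $q^h_{a,\epsilon}$ is dsos.
   Context: Let $z(x,2)$ be the vector of all monomials of degree exactly $2$ in $x=(x_1,\ldots,x_n)$. A quartic form $p$ is dsos (diagonally-dominant-sum-of-squares) if $p(x)=z(x,2)^TQz(x,2)$ for some symmetric diagonally dominant matrix $Q$, where a symmetric matrix $Q$ is diagonally dominant if $q_{ii}\ge\sum_{j\ne i}|q_{ij}|$ for all $i$. *)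

theory Defs
  imports Main Complex_Main
begin

definition deg2_monos :: "nat \<Rightarrow> (nat \<times> nat) set" where
  "deg2_monos n = {(i, j). i \<le> j \<and> j < n}"

definition deg2_mono :: "(nat \<Rightarrow> real) \<Rightarrow> nat \<times> nat \<Rightarrow> real" where
  "deg2_mono x u = x (fst u) * x (snd u)"

definition symmetric_on :: "'b set \<Rightarrow> ('b \<Rightarrow> 'b \<Rightarrow> real) \<Rightarrow> bool" where
  "symmetric_on S Q \<longleftrightarrow> (\<forall>u\<in>S. \<forall>v\<in>S. Q u v = Q v u)"

definition diag_dominant_on :: "'b set \<Rightarrow> ('b \<Rightarrow> 'b \<Rightarrow> real) \<Rightarrow> bool" where
  "diag_dominant_on S Q \<longleftrightarrow> (\<forall>u\<in>S. Q u u \<ge> (\<Sum>v\<in>S - {u}. \<bar>Q u v\<bar>))"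

definition dsos :: "nat \<Rightarrow> ((nat \<Rightarrow> real) \<Rightarrow> real) \<Rightarrow> bool" where
  "dsos n p \<longleftrightarrow> (\<exists>Q. symmetric_on (deg2_monos n) Q \<and> diag_dominant_on (deg2_monos n) Q \<and>
     (\<forall>x. p x = (\<Sum>u\<in>deg2_monos n. \<Sum>v\<in>deg2_monos n. deg2_mono x u * Q u v * deg2_mono x v)))"

definition qh :: "nat list \<Rightarrow> real \<Rightarrow> (nat \<Rightarrow> real) \<Rightarrow> real" where
  "qh a eps x = (let n = length a; s2 = (\<Sum>i<n. (x i)^2) / real n in
     (\<Sum>i<n. (x i)^4)
     + ((\<Sum>i<n. real (a ! i) * x i)^2 - 2 * (\<Sum>i<n. (x i)^2)) * s2
     + (real n - eps) * s2^2)"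

end

theory Submission
  imports Defs
begin

lemma M_Suc: "deg2_monos (Suc n) = deg2_monos n \<union> (\<lambda>i. (i,n)) ` {..n}"
  by (auto simp: deg2_monos_def less_Suc_eq)

lemma M_finite: "finite (deg2_monos n)"
proof -
  have "deg2_monos n \<subseteq> {..<n} \<times> {..<n}" by (auto simp: deg2_monos_def)
  thus ?thesis by (rule finite_subset) auto
qed

lemma pairsum:
  "(\<Sum>i<n. \<Sum>j<n. h i j) = (\<Sum>u\<in>deg2_monos n.
     (if fst u = snd u then h (fst u) (fst u) else h (fst u) (snd u) + h (snd u) (fst u)))"
proof (induction n)
  case 0
  then show ?case by (simp add: deg2_monos_def)
next
  case (Suc n)
  let ?f = "\<lambda>u. (if fst u = snd u then h (fst u) (fst u) else h (fst u) (snd u) + h (snd u) (fst u))"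
  have disj: "deg2_monos n \<inter> (\<lambda>i. (i,n)) ` {..n} = {}" by (auto simp: deg2_monos_def)
  have "(\<Sum>u\<in>deg2_monos (Suc n). ?f u) = (\<Sum>u\<in>deg2_monos n. ?f u) + (\<Sum>u\<in>(\<lambda>i. (i,n)) ` {..n}. ?f u)"
    unfolding M_Suc by (rule sum.union_disjoint) (auto simp: M_finite disj)
  also have "(\<Sum>u\<in>(\<lambda>i. (i,n)) ` {..n}. ?f u) = (\<Sum>i\<in>{..n}. ?f (i,n))"
    by (subst sum.reindex) (auto simp: inj_on_def)
  also have "\<dots> = (\<Sum>i<Suc n. ?f (i,n))" by (simp add: lessThan_Suc_atMost)
  also have "\<dots> = (\<Sum>i<n. h i n + h n i) + h n n"
    by (simp add: sum.lessThan_Suc)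
  finally have e: "(\<Sum>u\<in>deg2_monos (Suc n). ?f u) = (\<Sum>u\<in>deg2_monos n. ?f u) + ((\<Sum>i<n. h i n + h n i) + h n n)" .
  have "(\<Sum>i<Suc n. \<Sum>j<Suc n. h i j) = (\<Sum>i<n. \<Sum>j<n. h i j) + (\<Sum>i<n. h i n) + (\<Sum>j<n. h n j) + h n n"
    by (simp add: sum.lessThan_Suc sum.distrib algebra_simps)
  then show ?case using e Suc by (simp add: sum.distrib algebra_simps)
qed

definition z :: "(nat \<Rightarrow> real) \<Rightarrow> nat \<times> nat \<Rightarrow> real" where "z = deg2_mono"

definition R :: "nat \<Rightarrow> (nat \<Rightarrow> real) \<Rightarrow> (nat\<times>nat \<Rightarrow> nat\<times>nat \<Rightarrow> real) \<Rightarrow> real" where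
  "R n x Q = (\<Sum>u\<in>deg2_monos n. \<Sum>v\<in>deg2_monos n. deg2_mono x u * Q u v * deg2_mono x v)"

definition Q4 :: "nat\<times>nat \<Rightarrow> nat\<times>nat \<Rightarrow> real" where
  "Q4 u v = (if v = u then (if fst u = snd u then 1 else 0) else 0)"
definition DD :: "nat\<times>nat \<Rightarrow> nat\<times>nat \<Rightarrow> real" where
  "DD u v = (if v = u then (if fst u = snd u then 1 else 2) else 0)"

lemma R_diag: "R n x (\<lambda>u v. if v = u then d u else 0) = (\<Sum>u\<in>deg2_monos n. d u * (deg2_mono x u)^2)"
  unfolding R_def
proof (rule sum.cong)
  fix u assume "u \<in> deg2_monos n"
  have "(\<Sum>v\<in>deg2_monos n. deg2_mono x u * (if v = u then d u else 0) * deg2_mono x v)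
      = (\<Sum>v\<in>deg2_monos n. if v = u then deg2_mono x u * d u * deg2_mono x v else 0)"
    by (rule sum.cong) auto
  also have "\<dots> = deg2_mono x u * d u * deg2_mono x u" using \<open>u \<in> deg2_monos n\<close>
    by (simp add: sum.delta' M_finite)
  finally show "(\<Sum>v\<in>deg2_monos n. deg2_mono x u * (if v = u then d u else 0) * deg2_mono x v) = d u * (deg2_mono x u)^2"
    by (simp add: power2_eq_square)
qed simp

lemma R4: "R n x Q4 = (\<Sum>i<n. (x i)^4)"
proof -
  have "R n x Q4 = (\<Sum>u\<in>deg2_monos n. (if fst u = snd u then 1 else 0) * (deg2_mono x u)^2)"
    unfolding Q4_def by (rule R_diag)
  also have "\<dots> = (\<Sum>i<n. \<Sum>j<n. if i = j then (x i)^4 else 0)"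
    by (subst pairsum, rule sum.cong) (auto simp: deg2_mono_def power2_eq_square numeral_eq_Suc)
  also have "\<dots> = (\<Sum>i<n. (x i)^4)" by simp
  finally show ?thesis .
qed

lemma RD: "R n x DD = (\<Sum>i<n. (x i)^2)^2"
proof -
  have "R n x DD = (\<Sum>u\<in>deg2_monos n. (if fst u = snd u then 1 else 2) * (deg2_mono x u)^2)"
    unfolding DD_def by (rule R_diag)
  also have "\<dots> = (\<Sum>i<n. \<Sum>j<n. (x i)^2 * (x j)^2)"
    by (subst pairsum, rule sum.cong) (auto simp: deg2_mono_def power2_eq_square)
  also have "\<dots> = (\<Sum>i<n. (x i)^2)^2"
    by (simp add: power2_eq_square[of "sum _ _"] sum_product)
  finally show ?thesis .
qed

definition gS :: "nat\<times>nat \<Rightarrow> real" where "gS u = (if fst u = snd u then 1 else 0)"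
definition gL :: "nat list \<Rightarrow> nat\<times>nat \<Rightarrow> real" where
  "gL a u = (if fst u = snd u then (real (a ! fst u))^2 else 2 * real (a ! fst u) * real (a ! snd u))"

lemma linS: "(\<Sum>i<n. (x i)^2) = (\<Sum>u\<in>deg2_monos n. gS u * deg2_mono x u)"
proof -
  have "(\<Sum>i<n. (x i)^2) = (\<Sum>i<n. \<Sum>j<n. if i = j then x i * x j else 0)"
    by (simp add: power2_eq_square)
  also have "\<dots> = (\<Sum>u\<in>deg2_monos n. gS u * deg2_mono x u)"
    by (subst pairsum, rule sum.cong) (auto simp: gS_def deg2_mono_def)
  finally show ?thesis .
qed

lemma linL: "(\<Sum>i<n. real (a ! i) * x i)^2 = (\<Sum>u\<in>deg2_monos n. gL a u * deg2_mono x u)"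
proof -
  have "(\<Sum>i<n. real (a ! i) * x i)^2 = (\<Sum>i<n. \<Sum>j<n. (real (a ! i) * x i) * (real (a ! j) * x j))"
    by (simp add: power2_eq_square[of "sum _ _"] sum_product)
  also have "\<dots> = (\<Sum>u\<in>deg2_monos n. gL a u * deg2_mono x u)"
    by (subst pairsum, rule sum.cong) (auto simp: gL_def deg2_mono_def power2_eq_square algebra_simps)
  finally show ?thesis .
qed

definition PP :: "nat list \<Rightarrow> nat\<times>nat \<Rightarrow> nat\<times>nat \<Rightarrow> real" where
  "PP a u v = (gL a u * gS v + gL a v * gS u) / 2"

lemma RP: "R n x (PP a) = (\<Sum>i<n. real (a ! i) * x i)^2 * (\<Sum>i<n. (x i)^2)"
proof -
  let ?M = "deg2_monos n" and ?z = "deg2_mono x"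
  have A: "(\<Sum>u\<in>?M. \<Sum>v\<in>?M. ?z u * (gL a v * gS u) * ?z v) = (\<Sum>u\<in>?M. \<Sum>v\<in>?M. ?z u * (gL a u * gS v) * ?z v)"
    by (rule trans[OF sum.swap]) (simp add: mult_ac)
  have "R n x (PP a) = ((\<Sum>u\<in>?M. \<Sum>v\<in>?M. ?z u * (gL a u * gS v) * ?z v) + (\<Sum>u\<in>?M. \<Sum>v\<in>?M. ?z u * (gL a v * gS u) * ?z v)) / 2"
    unfolding R_def PP_def by (simp add: sum.distrib sum_divide_distrib algebra_simps add_divide_distrib)
  also have "\<dots> = (\<Sum>u\<in>?M. \<Sum>v\<in>?M. ?z u * (gL a u * gS v) * ?z v)" using A by simp
  also have "\<dots> = (\<Sum>u\<in>?M. gL a u * ?z u) * (\<Sum>v\<in>?M. gS v * ?z v)"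
    unfolding sum_product by (intro sum.cong refl) (simp add: mult_ac)
  finally show ?thesis by (simp add: linS linL)
qed

lemma R_lin: "R n x (\<lambda>u v. A u v + c * B u v + d * C u v) = R n x A + c * R n x B + d * R n x C"
  unfolding R_def by (simp add: algebra_simps sum.distrib sum_distrib_left)

theorem theorem5p4:
  fixes a :: "nat list"
  assumes "\<forall>i < length a. a ! i > 0"
  shows "\<exists>eps :: real. dsos (length a) (qh a eps)"
proof (cases "length a = 0")
  case True
  show ?thesis
    by (rule exI[of _ 0]) (auto simp: dsos_def True deg2_monos_def qh_def symmetric_on_def diag_dominant_on_def)
next
  case False
  define n where "n = length a"
  have npos: "real n > 0" using False n_def by simp
  define M where "M = deg2_monos n"
  define F where "F = (\<lambda>u v. Q4 u v + (1 / real n) * PP a u v)"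
  define C where "C = (\<Sum>u\<in>M. \<Sum>v\<in>M. \<bar>F u v\<bar>)"
  define Q where "Q = (\<lambda>u v. Q4 u v + (1 / real n) * PP a u v + C * DD u v)"
  define eps where "eps = real n - real n ^ 2 * (C + 2 / real n)"
  have C0: "C \<ge> 0" unfolding C_def by (auto intro!: sum_nonneg)
  have sym: "symmetric_on M Q"
    unfolding symmetric_on_def Q_def Q4_def DD_def PP_def by auto
  have dd: "diag_dominant_on M Q"
    unfolding diag_dominant_on_def
  proof
    fix u assume u: "u \<in> M"
    have fin: "finite M" unfolding M_def by (rule M_finite)
    have off: "(\<Sum>v\<in>M - {u}. \<bar>Q u v\<bar>) = (\<Sum>v\<in>M - {u}. \<bar>F u v\<bar>)"
      by (rule sum.cong) (auto simp: Q_def F_def DD_def)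
    have "(\<Sum>v\<in>M. \<bar>F u v\<bar>) = \<bar>F u u\<bar> + (\<Sum>v\<in>M - {u}. \<bar>F u v\<bar>)"
      using fin u by (rule sum.remove)
    moreover have "(\<Sum>v\<in>M. \<bar>F u v\<bar>) \<le> C"
      unfolding C_def using fin u
      by (intro member_le_sum) (auto intro!: sum_nonneg)
    moreover have "C * DD u u \<ge> C" using C0 by (auto simp: DD_def)
    moreover have "Q u u = F u u + C * DD u u" by (simp add: Q_def F_def)
    ultimately show "(\<Sum>v\<in>M - {u}. \<bar>Q u v\<bar>) \<le> Q u u" using off by linarith
  qed
  have rep: "\<forall>x. qh a eps x = R n x Q"
  proof
    fix x
    have "R n x Q = R n x Q4 + (1 / real n) * R n x (PP a) + C * R n x DD"
      unfolding Q_def by (rule R_lin)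
    also have "\<dots> = (\<Sum>i<n. (x i)^4) + (1 / real n) * ((\<Sum>i<n. real (a ! i) * x i)^2 * (\<Sum>i<n. (x i)^2)) + C * (\<Sum>i<n. (x i)^2)^2"
      by (simp add: R4 RP RD)
    also have "\<dots> = qh a eps x"
      unfolding qh_def eps_def n_def[symmetric] Let_def using npos
      by (simp add: field_simps power2_eq_square)
    finally show "qh a eps x = R n x Q" by simp
  qed
  show ?thesis
    unfolding dsos_def
    by (rule exI[of _ eps], rule exI[of _ Q]) (use sym dd rep in \<open>simp add: M_def n_def R_def\<close>)
qed

end
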